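(* Let $q\ge2$ and let $W$ be a $q$-ary symmetric channel on an alphabet $\mathcal{X}=\mathcal{Y}$ with $|\mathcal{X}|=q$, i.e., $W(y|x)=v$ if $y=x$ and $W(y|x)=u$ if $y\ne x$, where $u,v\in[0,1]$ and $v=1-(q-1)u$. Then $$\eta^J_\infty(W):=\sup_{P_0,P_1\in\Delta(\mathcal{X})}\frac{D^J_\infty(Q_0,Q_1)}{D^J_\infty(P_0,P_1)}=\frac{|v-u|}{v+u},$$ where $Q_i(y)=\sum_xP_i(x)W(y|x)$. Furthermore, this supremum is achieved in the limit by uniform binary distributions (distinct input pairs supported on a common two-element set that both converge to the uniform distribution on that set).
   Context: $\Delta(\mathcal{X})$ is the probability simplex on $\mathcal{X}$. $D_\infty(P\|Q)=\log\max_x\frac{P(x)}{Q(x)}$ and $D^J_\infty(P,Q)=D_\infty(P\|Q)+D_\infty(Q\|P)$. *)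

theory Defs
  imports "HOL-Analysis.Analysis"
begin

definition prob_simplex :: "('a::finite \<Rightarrow> real) set" where
  "prob_simplex = {P. (\<forall>x. 0 \<le> P x) \<and> (\<Sum>x\<in>UNIV. P x) = 1}"

definition Dinf :: "('a::finite \<Rightarrow> real) \<Rightarrow> ('a \<Rightarrow> real) \<Rightarrow> ereal" where
  "Dinf P Q = (if \<exists>x. P x > 0 \<and> Q x = 0 then \<infinity>
               else ereal (ln (Max ((\<lambda>x. P x / Q x) ` {x. P x > 0}))))"

definition DJinf :: "('a::finite \<Rightarrow> real) \<Rightarrow> ('a \<Rightarrow> real) \<Rightarrow> ereal" where
  "DJinf P Q = Dinf P Q + Dinf Q P"

text \<open>Output distribution of channel W (W y x = W(y|x)) on input P.\<close>
definition chan_out :: "('b \<Rightarrow> 'a::finite \<Rightarrow> real) \<Rightarrow> ('a \<Rightarrow> real) \<Rightarrow> 'b \<Rightarrow> real" where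
  "chan_out W P y = (\<Sum>x\<in>UNIV. P x * W y x)"

definition qsc :: "real \<Rightarrow> real \<Rightarrow> 'a \<Rightarrow> 'a \<Rightarrow> real" where
  "qsc u v y x = (if y = x then v else u)"

text \<open>Contraction coefficient for the Jeffreys max-divergence; the supremum ranges over
  pairs of input distributions with 0 < D^J_inf(P0,P1) < infinity (ratio well defined).\<close>
definition etaJ_inf :: "('a \<Rightarrow> 'a::finite \<Rightarrow> real) \<Rightarrow> ereal" where
  "etaJ_inf W = (SUP (P0, P1) \<in> {(P0, P1). P0 \<in> prob_simplex \<and> P1 \<in> prob_simplex \<and>
                     0 < DJinf P0 P1 \<and> DJinf P0 P1 < \<infinity>}.
                   DJinf (chan_out W P0) (chan_out W P1) / DJinf P0 P1)"

end

theory Submission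
  imports Defs
begin

lemma chan_qsc:
  fixes P :: "'a::finite \<Rightarrow> real"
  shows "chan_out (qsc u v) P y = u * (\<Sum>x\<in>UNIV. P x) + (v - u) * P y"
proof -
  have "(\<Sum>x\<in>UNIV. P x * qsc u v y x) = (\<Sum>x\<in>UNIV. u * P x + (if y = x then (v - u) * P x else 0))"
    by (rule sum.cong) (auto simp: qsc_def algebra_simps)
  also have "... = u * (\<Sum>x\<in>UNIV. P x) + (v - u) * P y"
    by (simp add: sum.distrib sum_distrib_left)
  finally show ?thesis unfolding chan_out_def .
qed

lemma Dinf_not_minf: "Dinf P Q \<noteq> -\<infinity>"
  unfolding Dinf_def by auto

lemma Dinf_le:
  fixes P Q :: "'a::finite \<Rightarrow> real"
  assumes "\<forall>x. 0 \<le> Q x" "\<exists>x. 0 < P x" "0 < K" "\<forall>x. P x \<le> K * Q x"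
  shows "Dinf P Q \<le> ereal (ln K)"
proof -
  have nz: "\<not>(\<exists>x. P x > 0 \<and> Q x = 0)" using assms(4) by (metis mult_zero_right not_less)
  let ?S = "(\<lambda>x. P x / Q x) ` {x. P x > 0}"
  have ne: "?S \<noteq> {}" using assms(2) by auto
  have le: "Max ?S \<le> K"
  proof (subst Max_le_iff)
    show "\<forall>a\<in>?S. a \<le> K"
    proof
      fix s assume "s \<in> ?S"
      then obtain x where x: "P x > 0" "s = P x / Q x" by auto
      have "Q x > 0" using nz x assms(1) by (metis less_eq_real_def)
      then show "s \<le> K" using x assms(4) by (simp add: pos_divide_le_eq mult.commute)
    qed
  qed (use ne in auto)
  have pos: "0 < Max ?S"
  proof -
    obtain x where x: "P x > 0" using assms(2) by auto
    have "Q x > 0" using nz x assms(1) by (metis less_eq_real_def)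
    then have "0 < P x / Q x" using x by simp
    also have "P x / Q x \<le> Max ?S" using x by (intro Max_ge) auto
    finally show ?thesis .
  qed
  show ?thesis unfolding Dinf_def using nz le pos by simp
qed

lemma Dinf_ptwise:
  fixes P Q :: "'a::finite \<Rightarrow> real"
  assumes "\<forall>x. 0 \<le> P x" "\<forall>x. 0 \<le> Q x" "\<exists>x. 0 < P x" "\<not>(\<exists>x. P x > 0 \<and> Q x = 0)"
  defines "M \<equiv> Max ((\<lambda>x. P x / Q x) ` {x. P x > 0})"
  shows "Dinf P Q = ereal (ln M)" "0 < M" "\<forall>x. P x \<le> M * Q x"
proof -
  show "Dinf P Q = ereal (ln M)" unfolding Dinf_def M_def using assms(4) by simp
  show pos: "0 < M"
  proof -
    obtain x where x: "P x > 0" using assms(3) by auto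
    have "Q x > 0" using assms(4) x assms(2) by (metis less_eq_real_def)
    then have "0 < P x / Q x" using x by simp
    also have "P x / Q x \<le> M" unfolding M_def using x by (intro Max_ge) auto
    finally show ?thesis .
  qed
  show "\<forall>x. P x \<le> M * Q x"
  proof
    fix x
    show "P x \<le> M * Q x"
    proof (cases "P x > 0")
      case True
      have q: "Q x > 0" using assms(4) True assms(2) by (metis less_eq_real_def)
      have "P x / Q x \<le> M" unfolding M_def using True by (intro Max_ge) auto
      then show ?thesis using q by (simp add: pos_divide_le_eq mult.commute)
    next
      case False
      then have "P x = 0" using assms(1) by (metis less_eq_real_def)
      then show ?thesis using pos assms(2) by simp
    qed
  qed
qed

lemma Dinf_eq:
  fixes P Q :: "'a::finite \<Rightarrow> real"
  assumes "0 < P x0" "P x0 / Q x0 = K" "\<forall>x. 0 < P x \<longrightarrow> 0 < Q x"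
    "\<forall>x. 0 < P x \<longrightarrow> P x / Q x \<le> K"
  shows "Dinf P Q = ereal (ln K)"
proof -
  have nz: "\<not>(\<exists>x. P x > 0 \<and> Q x = 0)" using assms(3) by force
  have "Max ((\<lambda>x. P x / Q x) ` {x. P x > 0}) = K"
    by (rule Max_eqI) (use assms in auto)
  then show ?thesis unfolding Dinf_def using nz by simp
qed

lemma simplex_sum: "P \<in> prob_simplex \<Longrightarrow> (\<Sum>x\<in>UNIV. P x) = 1"
  by (simp add: prob_simplex_def)

lemma simplex_nonneg: "P \<in> prob_simplex \<Longrightarrow> 0 \<le> P x"
  by (simp add: prob_simplex_def)

lemma simplex_pos: "P \<in> prob_simplex \<Longrightarrow> \<exists>x. 0 < P x"
proof (rule ccontr)
  assume P: "P \<in> prob_simplex" and "\<not> (\<exists>x. 0 < P x)"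
  then have "\<forall>x. P x = 0" using simplex_nonneg[OF P] by (metis less_eq_real_def)
  then show False using simplex_sum[OF P] by simp
qed

lemma simplex_eq:
  assumes P0: "P0 \<in> prob_simplex" and P1: "P1 \<in> prob_simplex" and le: "\<forall>x. P0 x \<le> P1 x"
  shows "P0 = P1"
proof -
  have "(\<Sum>x\<in>UNIV. P1 x - P0 x) = 0"
    using simplex_sum[OF P0] simplex_sum[OF P1] by (simp add: sum_subtractf)
  then have "\<forall>x\<in>UNIV. P1 x - P0 x = 0"
    using le by (subst (asm) sum_nonneg_eq_0_iff) auto
  then show ?thesis by auto
qed

lemma simplex_le_sum:
  fixes P0 P1 :: "'a::finite \<Rightarrow> real"
  assumes "P0 \<in> prob_simplex" "P1 \<in> prob_simplex" "\<forall>x. c * P1 x \<le> P0 x"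
  shows "P0 y - c * P1 y \<le> 1 - c"
proof -
  have "P0 y - c * P1 y \<le> (\<Sum>x\<in>UNIV. P0 x - c * P1 x)"
    by (rule member_le_sum) (use assms in auto)
  also have "... = 1 - c" using simplex_sum[OF assms(1)] simplex_sum[OF assms(2)]
    by (simp add: sum_subtractf sum_distrib_left[symmetric])
  finally show ?thesis .
qed

lemma simplex_le_sum2:
  fixes P0 P1 :: "'a::finite \<Rightarrow> real"
  assumes "P0 \<in> prob_simplex" "P1 \<in> prob_simplex" "\<forall>x. P0 x \<le> c * P1 x"
  shows "c * P1 y - P0 y \<le> c - 1"
proof -
  have "c * P1 y - P0 y \<le> (\<Sum>x\<in>UNIV. c * P1 x - P0 x)"
    by (rule member_le_sum) (use assms in auto)
  also have "... = c - 1" using simplex_sum[OF assms(1)] simplex_sum[OF assms(2)]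
    by (simp add: sum_subtractf sum_distrib_left[symmetric])
  finally show ?thesis .
qed

lemma ereal_div_le:
  assumes "x \<le> ereal (c * t)" "0 < t"
  shows "x / ereal t \<le> ereal c"
proof (cases x)
  case (real r)
  then show ?thesis using assms by (simp add: pos_divide_le_eq)
next
  case PInf
  then show ?thesis using assms by simp
next
  case MInf
  then show ?thesis using assms by (simp add: divide_ereal_def)
qed

lemma phi_deriv_nonneg:
  fixes h l z :: real
  assumes "0 \<le> l" "l \<le> h" "0 < h" "0 < z"
  shows "0 \<le> (h - l) / (h + l) - h * z / (h * z + l) + l * z / (l * z + h)"
proof -
  have p1: "0 < h * z + l" using assms by (simp add: add_pos_nonneg)
  have p2: "0 < l * z + h" using assms by (simp add: add_nonneg_pos)
  have p3: "0 < h + l" using assms by simp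
  have e1: "h * z/(h * z+l) - l * z/(l * z+h) = z * (h^2-l^2)/((h * z+l) * (l * z+h))"
    using p1 p2 by (simp add: divide_simps power2_eq_square) (simp add: algebra_simps)
  have key: "z * (h^2-l^2) * (h+l) \<le> (h-l) * ((h * z+l) * (l * z+h))"
  proof -
    have "(h-l) * ((h * z+l) * (l * z+h)) - z * (h^2-l^2) * (h+l) = (h - l) * (h * l * (z - 1)^2)"
      by (simp add: power2_eq_square algebra_simps)
    also have "... \<ge> 0" using assms by simp
    finally show ?thesis by simp
  qed
  have "z * (h^2-l^2)/((h * z+l) * (l * z+h)) \<le> (h - l) / (h + l)"
    using p1 p2 p3 key by (simp add: divide_simps)
  then show ?thesis using e1 by simp
qed

lemma phi_mono:
  fixes h l X Y :: real
  assumes "0 \<le> l" "l \<le> h" "0 < h" "0 < Y" "Y \<le> X"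
  shows "(ln (h * X + l) - ln (l * X + h)) - (ln (h * Y + l) - ln (l * Y + h))
         \<le> (h - l) / (h + l) * (ln X - ln Y)"
proof -
  define c where "c = (h - l) / (h + l)"
  define F where "F t = c * t - ln (h * exp t + l) + ln (l * exp t + h)" for t
  have "F (ln Y) \<le> F (ln X)"
  proof (rule DERIV_nonneg_imp_nondecreasing[of "ln Y" "ln X" F])
    show "ln Y \<le> ln X" using assms by simp
    fix t assume "ln Y \<le> t" "t \<le> ln X"
    have p1: "0 < h * exp t + l" using assms by (simp add: add_pos_nonneg)
    have p2: "0 < l * exp t + h" using assms by (simp add: add_nonneg_pos)
    have "DERIV F t :> c - h * exp t / (h * exp t + l) + l * exp t / (l * exp t + h)"
      unfolding F_def using p1 p2 apply (auto intro!: derivative_eq_intros)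
      apply (simp add: mult.commute)
      done
    moreover have "0 \<le> c - h * exp t / (h * exp t + l) + l * exp t / (l * exp t + h)"
      unfolding c_def using phi_deriv_nonneg[OF assms(1,2,3), of "exp t"] by simp
    ultimately show "\<exists>y. DERIV F t :> y \<and> y \<ge> 0" by blast
  qed
  then show ?thesis using assms unfolding F_def c_def[symmetric] by (simp add: right_diff_distrib)
qed

lemma key_ineq:
  fixes h l m M :: real
  assumes l: "0 \<le> l" "l \<le> h" "0 < h" and m: "0 < m" "m < 1" and M: "1 < M"
  shows "ln ((h * M * (1-m) + l * m * (M-1)) / (h * (1-m) + l * (M-1)))
       + ln ((h * (M-1) + l * (1-m)) / (l * M * (1-m) + h * m * (M-1)))
       \<le> (h - l) / (h + l) * (ln M - ln m)"
proof -
  define X where "X = M * (1-m) / (m * (M-1))"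
  define Y where "Y = (1-m) / (M-1)"
  have r: "0 < M - 1" "0 < 1 - m" using m M by auto
  have Ypos: "0 < Y" unfolding Y_def using r by simp
  have XY: "X = Y * (M / m)" unfolding X_def Y_def by (simp add: field_simps)
  have YX: "Y \<le> X" unfolding XY using Ypos m M by (simp add: le_divide_eq)
  have Xpos: "0 < X" using Ypos YX by simp
  have e1: "h * M * (1-m) + l * m * (M-1) = m * (M-1) * (h * X + l)"
    unfolding X_def using r m by (simp add: field_simps)
  have e2: "h * (1-m) + l * (M-1) = (M-1) * (h * Y + l)"
    unfolding Y_def using r by (simp add: field_simps)
  have e3: "h * (M-1) + l * (1-m) = (M-1) * (l * Y + h)"
    unfolding Y_def using r by (simp add: field_simps)
  have e4: "l * M * (1-m) + h * m * (M-1) = m * (M-1) * (l * X + h)"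
    unfolding X_def using r m by (simp add: field_simps)
  have q1: "0 < h * X + l" using Xpos l by (simp add: add_pos_nonneg)
  have q2: "0 < h * Y + l" using Ypos l by (simp add: add_pos_nonneg)
  have q3: "0 < l * Y + h" using Ypos l by (simp add: add_nonneg_pos)
  have q4: "0 < l * X + h" using Xpos l by (simp add: add_nonneg_pos)
  have "ln ((h * M * (1-m) + l * m * (M-1)) / (h * (1-m) + l * (M-1)))
       + ln ((h * (M-1) + l * (1-m)) / (l * M * (1-m) + h * m * (M-1)))
      = (ln (h * X + l) - ln (l * X + h)) - (ln (h * Y + l) - ln (l * Y + h))"
    unfolding e1 e2 e3 e4 using q1 q2 q3 q4 r m
    by (simp add: ln_div ln_mult)
  also have "... \<le> (h - l) / (h + l) * (ln X - ln Y)" by (rule phi_mono[OF l Ypos YX])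
  also have "ln X - ln Y = ln M - ln m" unfolding XY using Ypos m M
    by (simp add: ln_mult ln_div)
  finally show ?thesis .
qed

lemma core_bounds:
  fixes u v m M x0 x1 :: real
  assumes u: "0 \<le> u" and v: "0 \<le> v"
    and a0: "0 \<le> x0 - m * x1" and a1: "x0 - m * x1 \<le> 1 - m"
    and b0: "0 \<le> M * x1 - x0" and b1: "M * x1 - x0 \<le> M - 1"
  shows "(u + (v-u) * x0) * (max u v * (1-m) + min u v * (M-1))
           \<le> (max u v * M * (1-m) + min u v * m * (M-1)) * (u + (v-u) * x1)"
    and "(min u v * M * (1-m) + max u v * m * (M-1)) * (u + (v-u) * x1)
           \<le> (max u v * (M-1) + min u v * (1-m)) * (u + (v-u) * x0)"
proof -
  define a where "a = x0 - m * x1"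
  define b where "b = M * x1 - x0"
  define p where "p = 1 - m"
  define r where "r = M - 1"
  have A: "0 \<le> a" "a \<le> p" "0 \<le> b" "b \<le> r" using assms unfolding a_def b_def p_def r_def by auto
  show "(u + (v-u) * x0) * (max u v * (1-m) + min u v * (M-1))
           \<le> (max u v * M * (1-m) + min u v * m * (M-1)) * (u + (v-u) * x1)"
  proof (cases "u \<le> v")
    case True
    have "(max u v * M * (1-m) + min u v * m * (M-1)) * (u + (v-u) * x1) - (u + (v-u) * x0) * (max u v * (1-m) + min u v * (M-1))
      = v * p * (v-u) * b + u * r * (v-u) * (p-a)"
      using True unfolding a_def b_def p_def r_def by (simp add: algebra_simps)
    also have "... \<ge> 0" using True A u v by (intro add_nonneg_nonneg mult_nonneg_nonneg) auto
    finally show ?thesis by simp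
  next
    case False
    have "(max u v * M * (1-m) + min u v * m * (M-1)) * (u + (v-u) * x1) - (u + (v-u) * x0) * (max u v * (1-m) + min u v * (M-1))
      = u * p * (u-v) * (r-b) + v * r * (u-v) * a"
      using False unfolding a_def b_def p_def r_def by (simp add: algebra_simps)
    also have "... \<ge> 0" using False A u v by (intro add_nonneg_nonneg mult_nonneg_nonneg) auto
    finally show ?thesis by simp
  qed
  show "(min u v * M * (1-m) + max u v * m * (M-1)) * (u + (v-u) * x1)
           \<le> (max u v * (M-1) + min u v * (1-m)) * (u + (v-u) * x0)"
  proof (cases "u \<le> v")
    case True
    have "(max u v * (M-1) + min u v * (1-m)) * (u + (v-u) * x0) - (min u v * M * (1-m) + max u v * m * (M-1)) * (u + (v-u) * x1)
      = u * p * (v-u) * (r-b) + v * r * (v-u) * a"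
      using True unfolding a_def b_def p_def r_def by (simp add: algebra_simps)
    also have "... \<ge> 0" using True A u v by (intro add_nonneg_nonneg mult_nonneg_nonneg) auto
    finally show ?thesis by simp
  next
    case False
    have "(max u v * (M-1) + min u v * (1-m)) * (u + (v-u) * x0) - (min u v * M * (1-m) + max u v * m * (M-1)) * (u + (v-u) * x1)
      = u * r * (u-v) * (p-a) + v * p * (u-v) * b"
      using False unfolding a_def b_def p_def r_def by (simp add: algebra_simps)
    also have "... \<ge> 0" using False A u v by (intro add_nonneg_nonneg mult_nonneg_nonneg) auto
    finally show ?thesis by simp
  qed
qed

lemma upper_bound:
  fixes P0 P1 :: "'a::finite \<Rightarrow> real" and u v :: real
  assumes u: "0 \<le> u" and v: "0 \<le> v"
    and v_def: "v = 1 - (real CARD('a) - 1) * u"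
    and P0: "P0 \<in> prob_simplex" and P1: "P1 \<in> prob_simplex"
    and pos: "0 < DJinf P0 P1" and fin: "DJinf P0 P1 < \<infinity>"
  shows "DJinf (chan_out (qsc u v) P0) (chan_out (qsc u v) P1) / DJinf P0 P1
         \<le> ereal (\<bar>v - u\<bar> / (v + u))"
proof -
  have uv: "0 < u + v"
  proof (rule ccontr)
    assume "\<not> 0 < u + v"
    then have "u = 0" "v = 0" using u v by auto
    then show False using v_def by simp
  qed
  have nn0: "\<forall>x. 0 \<le> P0 x" and nn1: "\<forall>x. 0 \<le> P1 x"
    using simplex_nonneg[OF P0] simplex_nonneg[OF P1] by auto
  have s0: "(\<Sum>x\<in>UNIV. P0 x) = 1" and s1: "(\<Sum>x\<in>UNIV. P1 x) = 1"
    using simplex_sum[OF P0] simplex_sum[OF P1] by auto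
  have ex0: "\<exists>x. 0 < P0 x" and ex1: "\<exists>x. 0 < P1 x"
    using simplex_pos[OF P0] simplex_pos[OF P1] by auto
  have nz01: "\<not>(\<exists>x. P0 x > 0 \<and> P1 x = 0)"
  proof
    assume "\<exists>x. P0 x > 0 \<and> P1 x = 0"
    then have "Dinf P0 P1 = \<infinity>" unfolding Dinf_def by simp
    then have "DJinf P0 P1 = \<infinity>" unfolding DJinf_def using Dinf_not_minf[of P1 P0] by simp
    then show False using fin by simp
  qed
  have nz10: "\<not>(\<exists>x. P1 x > 0 \<and> P0 x = 0)"
  proof
    assume "\<exists>x. P1 x > 0 \<and> P0 x = 0"
    then have "Dinf P1 P0 = \<infinity>" unfolding Dinf_def by simp
    then have "DJinf P0 P1 = \<infinity>" unfolding DJinf_def using Dinf_not_minf[of P0 P1] by simp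
    then show False using fin by simp
  qed
  define M where "M = Max ((\<lambda>x. P0 x / P1 x) ` {x. P0 x > 0})"
  define M' where "M' = Max ((\<lambda>x. P1 x / P0 x) ` {x. P1 x > 0})"
  note DM = Dinf_ptwise[OF nn0 nn1 ex0 nz01, folded M_def]
  note DM' = Dinf_ptwise[OF nn1 nn0 ex1 nz10, folded M'_def]
  have DJ: "DJinf P0 P1 = ereal (ln M + ln M')"
    unfolding DJinf_def DM(1) DM'(1) by simp
  have Mge: "1 \<le> M"
  proof -
    have "(\<Sum>x\<in>UNIV. P0 x) \<le> (\<Sum>x\<in>UNIV. M * P1 x)" by (rule sum_mono) (use DM(3) in auto)
    then show ?thesis using s0 s1 by (simp add: sum_distrib_left[symmetric])
  qed
  have M'ge: "1 \<le> M'"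
  proof -
    have "(\<Sum>x\<in>UNIV. P1 x) \<le> (\<Sum>x\<in>UNIV. M' * P0 x)" by (rule sum_mono) (use DM'(3) in auto)
    then show ?thesis using s0 s1 by (simp add: sum_distrib_left[symmetric])
  qed
  have Mgt: "1 < M"
  proof (rule ccontr)
    assume "\<not> 1 < M"
    then have "M = 1" using Mge by simp
    then have "\<forall>x. P0 x \<le> P1 x" using DM(3) by simp
    then have eq: "P0 = P1" by (rule simplex_eq[OF P0 P1])
    have "(\<lambda>x. P1 x / P0 x) ` {x. P1 x > 0} = {1}" using eq ex1 by auto
    then have "M' = 1" unfolding M'_def by simp
    then show False using pos DJ \<open>M = 1\<close> by simp
  qed
  have M'gt: "1 < M'"
  proof (rule ccontr)
    assume "\<not> 1 < M'"
    then have "M' = 1" using M'ge by simp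
    then have "\<forall>x. P1 x \<le> P0 x" using DM'(3) by simp
    then have eq: "P1 = P0" by (rule simplex_eq[OF P1 P0])
    have "(\<lambda>x. P0 x / P1 x) ` {x. P0 x > 0} = {1}" using eq ex0 by auto
    then have "M = 1" unfolding M_def by simp
    then show False using pos DJ \<open>M' = 1\<close> by simp
  qed
  define m where "m = 1 / M'"
  have m: "0 < m" "m < 1" unfolding m_def using M'gt by auto
  have lnm: "ln m = - ln M'" unfolding m_def using M'gt by (simp add: ln_div)
  have mle: "\<forall>x. m * P1 x \<le> P0 x"
  proof
    fix x
    have "P1 x \<le> M' * P0 x" using DM'(3) by simp
    then show "m * P1 x \<le> P0 x" unfolding m_def using M'gt by (simp add: field_simps)
  qed
  have Mle: "\<forall>x. 1 * P0 x \<le> M * P1 x" using DM(3) by simp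
  define Q0 where "Q0 = chan_out (qsc u v) P0"
  define Q1 where "Q1 = chan_out (qsc u v) P1"
  have Q0e: "Q0 y = u + (v - u) * P0 y" for y unfolding Q0_def chan_qsc s0 by simp
  have Q1e: "Q1 y = u + (v - u) * P1 y" for y unfolding Q1_def chan_qsc s1 by simp
  have Qnn: "0 \<le> chan_out (qsc u v) P y" if "P \<in> prob_simplex" for P :: "'a \<Rightarrow> real" and y
    unfolding chan_out_def qsc_def using simplex_nonneg[OF that] u v
    by (intro sum_nonneg) auto
  have Qsum: "(\<Sum>y\<in>UNIV. u + (v - u) * P y) = 1" if "P \<in> prob_simplex" for P :: "'a \<Rightarrow> real"
  proof -
    have "(\<Sum>y\<in>UNIV. u + (v - u) * P y) = real CARD('a) * u + (v - u)"
      using simplex_sum[OF that] by (simp add: sum.distrib sum_distrib_left[symmetric])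
    also have "... = 1" using v_def by (simp add: algebra_simps)
    finally show ?thesis .
  qed
  have Qex: "\<exists>y. 0 < u + (v - u) * P y" if "P \<in> prob_simplex" for P :: "'a \<Rightarrow> real"
  proof (rule ccontr)
    assume "\<not> (\<exists>y. 0 < u + (v - u) * P y)"
    then have "(\<Sum>y\<in>UNIV. u + (v - u) * P y) \<le> 0" by (intro sum_nonpos) (meson not_less)
    then show False using Qsum[OF that] by simp
  qed
  define h where "h = max u v"
  define l where "l = min u v"
  have hl: "0 \<le> l" "l \<le> h" "0 < h" unfolding h_def l_def using u v uv by auto
  define Nu where "Nu = h * M * (1-m) + l * m * (M-1)"
  define Dn where "Dn = h * (1-m) + l * (M-1)"
  define Ln where "Ln = l * M * (1-m) + h * m * (M-1)"
  define Ld where "Ld = h * (M-1) + l * (1-m)"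
  have r: "0 < M - 1" "0 < 1 - m" using Mgt m by auto
  have Nup: "0 < Nu" unfolding Nu_def using hl r m Mgt
    by (intro add_pos_nonneg mult_pos_pos mult_nonneg_nonneg) auto
  have Dnp: "0 < Dn" unfolding Dn_def using hl r
    by (intro add_pos_nonneg mult_pos_pos mult_nonneg_nonneg) auto
  have Lnp: "0 < Ln" unfolding Ln_def using hl r m Mgt
    by (intro add_nonneg_pos mult_pos_pos mult_nonneg_nonneg) auto
  have Ldp: "0 < Ld" unfolding Ld_def using hl r
    by (intro add_pos_nonneg mult_pos_pos mult_nonneg_nonneg) auto
  have cb: "Q0 y * Dn \<le> Nu * Q1 y" "Ln * Q1 y \<le> Ld * Q0 y" for y
  proof -
    have a0: "0 \<le> P0 y - m * P1 y" using mle by (simp add: algebra_simps)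
    have a1: "P0 y - m * P1 y \<le> 1 - m" using simplex_le_sum[OF P0 P1 mle] .
    have b0: "0 \<le> M * P1 y - P0 y" using DM(3) by (simp add: algebra_simps)
    have b1: "M * P1 y - P0 y \<le> M - 1" using simplex_le_sum2[OF P0 P1] DM(3) by simp
    note C = core_bounds[OF u v a0 a1 b0 b1]
    show "Q0 y * Dn \<le> Nu * Q1 y" using C(1) unfolding Q0e Q1e Dn_def Nu_def h_def l_def .
    show "Ln * Q1 y \<le> Ld * Q0 y" using C(2) unfolding Q0e Q1e Ld_def Ln_def h_def l_def .
  qed
  have D1: "Dinf Q0 Q1 \<le> ereal (ln (Nu / Dn))"
  proof (rule Dinf_le)
    show "\<forall>x. 0 \<le> Q1 x" unfolding Q1_def using Qnn[OF P1] by simp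
    show "\<exists>x. 0 < Q0 x" unfolding Q0e using Qex[OF P0] .
    show "0 < Nu / Dn" using Nup Dnp by simp
    show "\<forall>x. Q0 x \<le> Nu / Dn * Q1 x" using cb(1) Dnp by (simp add: field_simps)
  qed
  have D2: "Dinf Q1 Q0 \<le> ereal (ln (Ld / Ln))"
  proof (rule Dinf_le)
    show "\<forall>x. 0 \<le> Q0 x" unfolding Q0_def using Qnn[OF P0] by simp
    show "\<exists>x. 0 < Q1 x" unfolding Q1e using Qex[OF P1] .
    show "0 < Ld / Ln" using Ldp Lnp by simp
    show "\<forall>x. Q1 x \<le> Ld / Ln * Q0 x" using cb(2) Lnp by (simp add: field_simps mult.commute)
  qed
  have "DJinf Q0 Q1 \<le> ereal (ln (Nu / Dn)) + ereal (ln (Ld / Ln))"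
    unfolding DJinf_def using D1 D2 by (rule add_mono)
  also have "... = ereal (ln (Nu / Dn) + ln (Ld / Ln))" by simp
  also have "ln (Nu / Dn) + ln (Ld / Ln) \<le> (h - l) / (h + l) * (ln M - ln m)"
    unfolding Nu_def Dn_def Ld_def Ln_def by (rule key_ineq[OF hl m Mgt])
  also have "(h - l) / (h + l) = \<bar>v - u\<bar> / (v + u)" unfolding h_def l_def by (auto simp: max_def min_def)
  also have "ln M - ln m = ln M + ln M'" using lnm by simp
  finally have "DJinf Q0 Q1 \<le> ereal (\<bar>v - u\<bar> / (v + u) * (ln M + ln M'))" by simp
  moreover have "0 < ln M + ln M'" using Mgt M'gt by (simp add: add_pos_pos)
  ultimately show ?thesis unfolding DJ Q0_def[symmetric] Q1_def[symmetric] by (rule ereal_div_le)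
qed

definition bin :: "'a \<Rightarrow> 'a \<Rightarrow> real \<Rightarrow> real \<Rightarrow> real \<Rightarrow> 'a \<Rightarrow> real" where
  "bin a b \<alpha> \<beta> \<gamma> x = (if x = a then \<alpha> else if x = b then \<beta> else \<gamma>)"

lemma bin_sum:
  fixes a b :: "'a::finite"
  assumes "a \<noteq> b"
  shows "(\<Sum>x\<in>UNIV. bin a b \<alpha> \<beta> 0 x) = \<alpha> + \<beta>"
proof -
  have "(\<Sum>x\<in>UNIV. bin a b \<alpha> \<beta> 0 x) = (\<Sum>x\<in>UNIV. (if x = a then \<alpha> else 0) + (if x = b then \<beta> else 0))"
    by (rule sum.cong) (use assms in \<open>auto simp: bin_def\<close>)
  also have "... = \<alpha> + \<beta>" by (simp add: sum.distrib)
  finally show ?thesis .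
qed

lemma one_le_max_ratio:
  fixes A B :: real assumes "0 < A" "0 < B"
  shows "1 \<le> max (A / B) (B / A)"
proof (cases "A \<le> B")
  case True then show ?thesis using assms by (simp add: le_max_iff_disj le_divide_eq)
next
  case False then show ?thesis using assms by (simp add: le_max_iff_disj le_divide_eq)
qed

lemma ln_max_ratio:
  fixes A B :: real assumes "0 < A" "0 < B"
  shows "ln (max (A / B) (B / A)) = \<bar>ln A - ln B\<bar>"
proof (cases "A / B \<le> B / A")
  case True
  then have "ln (A/B) \<le> ln (B/A)" using assms by simp
  then show ?thesis using True assms by (simp add: max_def ln_div)
next
  case False
  then have "ln (B/A) \<le> ln (A/B)" using assms by simp
  then show ?thesis using False assms by (simp add: max_def ln_div)
qed

lemma swapD:
  fixes a b :: "'a::finite"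
  assumes ab: "a \<noteq> b" and pos: "0 < \<alpha>" "0 < \<beta>" "0 \<le> \<gamma>"
  shows "Dinf (bin a b \<alpha> \<beta> \<gamma>) (bin a b \<beta> \<alpha> \<gamma>) = ereal (\<bar>ln \<alpha> - ln \<beta>\<bar>)"
proof -
  define K where "K = max (\<alpha> / \<beta>) (\<beta> / \<alpha>)"
  have K1: "1 \<le> K" unfolding K_def using one_le_max_ratio pos by simp
  define x0 where "x0 = (if \<beta> / \<alpha> \<le> \<alpha> / \<beta> then a else b)"
  have "Dinf (bin a b \<alpha> \<beta> \<gamma>) (bin a b \<beta> \<alpha> \<gamma>) = ereal (ln K)"
  proof (rule Dinf_eq[of _ x0])
    show "0 < bin a b \<alpha> \<beta> \<gamma> x0" unfolding x0_def bin_def using pos ab by auto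
    show "bin a b \<alpha> \<beta> \<gamma> x0 / bin a b \<beta> \<alpha> \<gamma> x0 = K"
      unfolding x0_def bin_def K_def using ab by (auto simp: max_def)
    show "\<forall>x. 0 < bin a b \<alpha> \<beta> \<gamma> x \<longrightarrow> 0 < bin a b \<beta> \<alpha> \<gamma> x"
      unfolding bin_def using pos by auto
    show "\<forall>x. 0 < bin a b \<alpha> \<beta> \<gamma> x \<longrightarrow> bin a b \<alpha> \<beta> \<gamma> x / bin a b \<beta> \<alpha> \<gamma> x \<le> K"
      unfolding bin_def K_def using ab K1 K_def by auto
  qed
  then show ?thesis unfolding K_def using ln_max_ratio pos by simp
qed

lemma chan_bin:
  fixes a b :: "'a::finite"
  assumes "a \<noteq> b" "\<alpha> + \<beta> = 1"
  shows "chan_out (qsc u v) (bin a b \<alpha> \<beta> 0) = bin a b (u + (v-u) * \<alpha>) (u + (v-u) * \<beta>) u"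
proof
  fix y
  have s: "(\<Sum>x\<in>UNIV. bin a b \<alpha> \<beta> 0 x) = 1" using bin_sum[OF assms(1)] assms(2) by simp
  show "chan_out (qsc u v) (bin a b \<alpha> \<beta> 0) y = bin a b (u + (v-u) * \<alpha>) (u + (v-u) * \<beta>) u y"
    unfolding chan_qsc s by (simp add: bin_def)
qed

lemma AB_pos:
  fixes u v h :: real
  assumes u: "0 \<le> u" and v: "0 \<le> v" and uv: "0 < u + v" and h: "0 \<le> h" "h < 1/2"
  shows "0 < u + (v - u) * (1/2 + h)" "0 < u + (v - u) * (1/2 - h)"
proof -
  have ab: "\<bar>v - u\<bar> \<le> u + v" using u v by auto
  have m1: "(v - u) * h \<le> (u + v) * h" using ab h by (intro mult_right_mono) auto
  have m2: "-(u + v) * h \<le> (v - u) * h" using ab h by (intro mult_right_mono) auto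
  have p: "0 < (u + v) * (1/2 - h)" using uv h by simp
  have e1: "u + (v - u) * (1/2 + h) = (u + v) / 2 + (v - u) * h" by (simp add: field_simps)
  have e2: "u + (v - u) * (1/2 - h) = (u + v) / 2 - (v - u) * h" by (simp add: field_simps)
  have e3: "(u + v) * (1/2 - h) = (u + v) / 2 - (u + v) * h" by (simp add: algebra_simps)
  have e4: "-(u + v) * h = - ((u + v) * h)" by (simp add: algebra_simps)
  show "0 < u + (v - u) * (1/2 + h)" "0 < u + (v - u) * (1/2 - h)"
    unfolding e1 e2 using m1 m2 p e3 e4 by linarith+
qed

lemma seq_exists:
  fixes a b :: "'a::finite" and u v :: real
  assumes ab: "a \<noteq> b" and u: "0 \<le> u" and v: "0 \<le> v" and uv: "0 < u + v"
  shows "\<exists>P0 P1 :: nat \<Rightarrow> 'a \<Rightarrow> real.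
           (\<forall>n. P0 n \<in> prob_simplex \<and> P1 n \<in> prob_simplex \<and> P0 n \<noteq> P1 n
                \<and> {x. P0 n x > 0} = {a, b} \<and> {x. P1 n x > 0} = {a, b}
                \<and> 0 < DJinf (P0 n) (P1 n) \<and> DJinf (P0 n) (P1 n) < \<infinity>)
         \<and> (\<forall>x. (\<lambda>n. P0 n x) \<longlonglongrightarrow> (if x \<in> {a, b} then 1/2 else 0))
         \<and> (\<forall>x. (\<lambda>n. P1 n x) \<longlonglongrightarrow> (if x \<in> {a, b} then 1/2 else 0))
         \<and> (\<lambda>n. DJinf (chan_out (qsc u v) (P0 n)) (chan_out (qsc u v) (P1 n))
                   / DJinf (P0 n) (P1 n)) \<longlonglongrightarrow> ereal (\<bar>v - u\<bar> / (v + u))"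
proof -
  define e where "e n = inverse (real (Suc n)) / 4" for n
  have epos: "0 < e n" for n unfolding e_def by simp
  have ele: "e n < 1/2" for n
  proof -
    have "inverse (real (Suc n)) \<le> 1" by (simp add: inverse_le_1_iff)
    then show ?thesis unfolding e_def by simp
  qed
  have elim: "e \<longlonglongrightarrow> 0" unfolding e_def
    by (intro tendsto_divide_zero LIMSEQ_inverse_real_of_nat)
  define P0 where "P0 n = bin a b (1/2 + e n) (1/2 - e n) 0" for n
  define P1 where "P1 n = bin a b (1/2 - e n) (1/2 + e n) 0" for n
  define d where "d = v - u"
  define FF where "FF h = ln (u + d * (1/2 + h)) - ln (u + d * (1/2 - h))" for h
  define GG where "GG h = ln (1/2 + h) - ln (1/2 - h)" for h :: real
  have Apos: "0 < u + d * (1/2 + e n)" "0 < u + d * (1/2 - e n)" for n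
    unfolding d_def using AB_pos[OF u v uv less_imp_le[OF epos] ele] by auto
  have simp0: "P0 n \<in> prob_simplex" for n
    unfolding prob_simplex_def P0_def using bin_sum[OF ab] epos[of n] ele[of n]
    by (auto simp: bin_def)
  have simp1: "P1 n \<in> prob_simplex" for n
    unfolding prob_simplex_def P1_def using bin_sum[OF ab] epos[of n] ele[of n]
    by (auto simp: bin_def)
  have gpos: "0 < GG (e n)" for n unfolding GG_def using epos[of n] ele[of n] by simp
  have DJP: "DJinf (P0 n) (P1 n) = ereal (2 * GG (e n))" for n
  proof -
    have "Dinf (P0 n) (P1 n) = ereal (\<bar>ln (1/2 + e n) - ln (1/2 - e n)\<bar>)"
      unfolding P0_def P1_def using epos[of n] ele[of n] by (intro swapD ab) auto
    moreover have "Dinf (P1 n) (P0 n) = ereal (\<bar>ln (1/2 - e n) - ln (1/2 + e n)\<bar>)"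
      unfolding P0_def P1_def using epos[of n] ele[of n] by (intro swapD ab) auto
    ultimately show ?thesis unfolding DJinf_def using gpos[of n] unfolding GG_def by simp
  qed
  have DJQ: "DJinf (chan_out (qsc u v) (P0 n)) (chan_out (qsc u v) (P1 n)) = ereal (2 * \<bar>FF (e n)\<bar>)" for n
  proof -
    have c0: "chan_out (qsc u v) (P0 n) = bin a b (u + d * (1/2 + e n)) (u + d * (1/2 - e n)) u"
      unfolding P0_def d_def by (rule chan_bin[OF ab]) simp
    have c1: "chan_out (qsc u v) (P1 n) = bin a b (u + d * (1/2 - e n)) (u + d * (1/2 + e n)) u"
      unfolding P1_def d_def by (rule chan_bin[OF ab]) simp
    have "Dinf (chan_out (qsc u v) (P0 n)) (chan_out (qsc u v) (P1 n)) = ereal \<bar>FF (e n)\<bar>"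
      unfolding c0 c1 FF_def using Apos[of n] u by (intro swapD ab) auto
    moreover have "Dinf (chan_out (qsc u v) (P1 n)) (chan_out (qsc u v) (P0 n)) = ereal \<bar>FF (e n)\<bar>"
      unfolding c0 c1 FF_def using Apos[of n] u swapD[OF ab, of "u + d * (1/2 - e n)" "u + d * (1/2 + e n)" u]
      by (simp add: abs_minus_commute)
    ultimately show ?thesis unfolding DJinf_def by simp
  qed
  have ratio: "DJinf (chan_out (qsc u v) (P0 n)) (chan_out (qsc u v) (P1 n)) / DJinf (P0 n) (P1 n)
      = ereal \<bar>FF (e n) / GG (e n)\<bar>" for n
  proof -
    have "ereal (2 * \<bar>FF (e n)\<bar>) / ereal (2 * GG (e n)) = ereal (2 * \<bar>FF (e n)\<bar> / (2 * GG (e n)))"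
      using gpos[of n] by (subst ereal_divide) auto
    also have "2 * \<bar>FF (e n)\<bar> / (2 * GG (e n)) = \<bar>FF (e n) / GG (e n)\<bar>"
      using gpos[of n] by (simp add: abs_divide)
    finally show ?thesis unfolding DJQ DJP .
  qed
  have K0: "u + d / 2 = (u + v) / 2" unfolding d_def by (simp add: field_simps)
  have K: "0 < u + d / 2" unfolding K0 using uv by simp
  have dF: "DERIV FF 0 :> 2 * d / (u + d / 2)"
    unfolding FF_def using K by (auto intro!: derivative_eq_intros)
  have dG: "DERIV GG 0 :> 4"
    unfolding GG_def by (auto intro!: derivative_eq_intros)
  have F0: "FF 0 = 0" "GG 0 = 0" unfolding FF_def GG_def by simp_all
  have fl: "filterlim e (at 0) sequentially"
    by (rule filterlim_atI[OF elim]) (use epos in \<open>auto intro: always_eventually simp: less_imp_neq[symmetric]\<close>)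
  have tF: "(\<lambda>h. FF h / h) \<midarrow>0\<rightarrow> 2 * d / (u + d / 2)" using dF unfolding DERIV_def F0 by simp
  have tG: "(\<lambda>h. GG h / h) \<midarrow>0\<rightarrow> 4" using dG unfolding DERIV_def F0 by simp
  have sF: "(\<lambda>n. FF (e n) / e n) \<longlonglongrightarrow> 2 * d / (u + d / 2)" by (rule filterlim_compose[OF tF fl])
  have sG: "(\<lambda>n. GG (e n) / e n) \<longlonglongrightarrow> 4" by (rule filterlim_compose[OF tG fl])
  have lim1: "(\<lambda>n. (FF (e n) / e n) / (GG (e n) / e n)) \<longlonglongrightarrow> (2 * d / (u + d / 2)) / 4"
    by (rule tendsto_divide[OF sF sG]) simp
  have eqf: "(\<lambda>n. (FF (e n) / e n) / (GG (e n) / e n)) = (\<lambda>n. FF (e n) / GG (e n))"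
  proof
    fix n
    have "e n \<noteq> 0" using epos[of n] by simp
    then show "(FF (e n) / e n) / (GG (e n) / e n) = FF (e n) / GG (e n)"
      by (cases "GG (e n) = 0") (simp_all add: field_simps)
  qed
  have cc: "(2 * d / (u + d / 2)) / 4 = d / (v + u)" unfolding K0 using uv by (simp add: field_simps)
  have "(\<lambda>n. FF (e n) / GG (e n)) \<longlonglongrightarrow> d / (v + u)" using lim1 unfolding eqf cc .
  then have "(\<lambda>n. \<bar>FF (e n) / GG (e n)\<bar>) \<longlonglongrightarrow> \<bar>d / (v + u)\<bar>" by (rule tendsto_rabs)
  moreover have "\<bar>d / (v + u)\<bar> = \<bar>v - u\<bar> / (v + u)" unfolding d_def using uv by simp
  ultimately have lim: "(\<lambda>n. DJinf (chan_out (qsc u v) (P0 n)) (chan_out (qsc u v) (P1 n)) / DJinf (P0 n) (P1 n))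
      \<longlonglongrightarrow> ereal (\<bar>v - u\<bar> / (v + u))" unfolding ratio by (intro tendsto_ereal) simp
  have conv0: "(\<lambda>n. P0 n x) \<longlonglongrightarrow> (if x \<in> {a, b} then 1/2 else 0)" for x
  proof -
    have t1: "(\<lambda>n. 1/2 + e n) \<longlonglongrightarrow> 1/2" using tendsto_add[OF tendsto_const elim, of "1/2::real"] by simp
    have t2: "(\<lambda>n. 1/2 - e n) \<longlonglongrightarrow> 1/2" using tendsto_diff[OF tendsto_const elim, of "1/2::real"] by simp
    show ?thesis unfolding P0_def bin_def using t1 t2 ab by auto
  qed
  have conv1: "(\<lambda>n. P1 n x) \<longlonglongrightarrow> (if x \<in> {a, b} then 1/2 else 0)" for x
  proof -
    have t1: "(\<lambda>n. 1/2 + e n) \<longlonglongrightarrow> 1/2" using tendsto_add[OF tendsto_const elim, of "1/2::real"] by simp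
    have t2: "(\<lambda>n. 1/2 - e n) \<longlonglongrightarrow> 1/2" using tendsto_diff[OF tendsto_const elim, of "1/2::real"] by simp
    show ?thesis unfolding P1_def bin_def using t1 t2 ab by auto
  qed
  have props: "P0 n \<in> prob_simplex \<and> P1 n \<in> prob_simplex \<and> P0 n \<noteq> P1 n
                \<and> {x. P0 n x > 0} = {a, b} \<and> {x. P1 n x > 0} = {a, b}
                \<and> 0 < DJinf (P0 n) (P1 n) \<and> DJinf (P0 n) (P1 n) < \<infinity>" for n
  proof -
    have "P0 n a \<noteq> P1 n a" unfolding P0_def P1_def bin_def using epos[of n] by simp
    then have "P0 n \<noteq> P1 n" by auto
    moreover have "{x. P0 n x > 0} = {a, b}" "{x. P1 n x > 0} = {a, b}"
      unfolding P0_def P1_def bin_def using epos[of n] ele[of n] by auto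
    ultimately show ?thesis using simp0 simp1 DJP gpos[of n] by simp
  qed
  show ?thesis using props conv0 conv1 lim by blast
qed

theorem theorem4p6:
  fixes u v :: real
  assumes q2: "CARD('a::finite) \<ge> 2"
    and u01: "0 \<le> u" "u \<le> 1" and v01: "0 \<le> v" "v \<le> 1"
    and v_def: "v = 1 - (real CARD('a) - 1) * u"
  shows "etaJ_inf (qsc u v :: 'a \<Rightarrow> 'a \<Rightarrow> real) = ereal (\<bar>v - u\<bar> / (v + u))
    \<and> (\<forall>a b :: 'a. a \<noteq> b \<longrightarrow>
        (\<exists>P0 P1 :: nat \<Rightarrow> 'a \<Rightarrow> real.
           (\<forall>n. P0 n \<in> prob_simplex \<and> P1 n \<in> prob_simplex \<and> P0 n \<noteq> P1 n
                \<and> {x. P0 n x > 0} = {a, b} \<and> {x. P1 n x > 0} = {a, b})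
         \<and> (\<forall>x. (\<lambda>n. P0 n x) \<longlonglongrightarrow> (if x \<in> {a, b} then 1/2 else 0))
         \<and> (\<forall>x. (\<lambda>n. P1 n x) \<longlonglongrightarrow> (if x \<in> {a, b} then 1/2 else 0))
         \<and> (\<lambda>n. DJinf (chan_out (qsc u v) (P0 n)) (chan_out (qsc u v) (P1 n))
                   / DJinf (P0 n) (P1 n)) \<longlonglongrightarrow> ereal (\<bar>v - u\<bar> / (v + u))))"
proof -
  have uv: "0 < u + v"
  proof (rule ccontr)
    assume "\<not> 0 < u + v"
    then have "u = 0" "v = 0" using u01 v01 by auto
    then show False using v_def by simp
  qed
  obtain a b :: 'a where ab: "a \<noteq> b"
  proof -
    have "\<exists>a b :: 'a. a \<noteq> b"
    proof (rule ccontr)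
      assume "\<not> (\<exists>a b :: 'a. a \<noteq> b)"
      then have e: "UNIV = {undefined :: 'a}" by auto
      have "card (UNIV :: 'a set) = 1" by (subst e) simp
      then show False using q2 by simp
    qed
    then show ?thesis using that by blast
  qed
  have ub: "etaJ_inf (qsc u v :: 'a \<Rightarrow> 'a \<Rightarrow> real) \<le> ereal (\<bar>v - u\<bar> / (v + u))"
    unfolding etaJ_inf_def
  proof (rule SUP_least)
    fix PP assume "PP \<in> {(P0, P1). P0 \<in> prob_simplex \<and> P1 \<in> (prob_simplex :: ('a \<Rightarrow> real) set) \<and>
                     0 < DJinf P0 P1 \<and> DJinf P0 P1 < \<infinity>}"
    then obtain P0 P1 where PP: "PP = (P0, P1)" "P0 \<in> prob_simplex" "P1 \<in> prob_simplex"
      "0 < DJinf P0 P1" "DJinf P0 P1 < \<infinity>" by auto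
    show "(case PP of (P0, P1) \<Rightarrow> DJinf (chan_out (qsc u v) P0) (chan_out (qsc u v) P1) / DJinf P0 P1)
          \<le> ereal (\<bar>v - u\<bar> / (v + u))"
      unfolding PP(1) using upper_bound[OF u01(1) v01(1) v_def PP(2-5)] by simp
  qed
  have lb: "ereal (\<bar>v - u\<bar> / (v + u)) \<le> etaJ_inf (qsc u v :: 'a \<Rightarrow> 'a \<Rightarrow> real)"
  proof -
    obtain P0 P1 :: "nat \<Rightarrow> 'a \<Rightarrow> real" where
      S: "\<forall>n. P0 n \<in> prob_simplex \<and> P1 n \<in> prob_simplex \<and> P0 n \<noteq> P1 n
                \<and> {x. P0 n x > 0} = {a, b} \<and> {x. P1 n x > 0} = {a, b}
                \<and> 0 < DJinf (P0 n) (P1 n) \<and> DJinf (P0 n) (P1 n) < \<infinity>"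
      and L: "(\<lambda>n. DJinf (chan_out (qsc u v) (P0 n)) (chan_out (qsc u v) (P1 n))
                   / DJinf (P0 n) (P1 n)) \<longlonglongrightarrow> ereal (\<bar>v - u\<bar> / (v + u))"
      using seq_exists[OF ab u01(1) v01(1) uv] by blast
    show ?thesis
    proof (rule LIMSEQ_le_const2[OF L], intro exI allI impI)
      fix n
      have "(P0 n, P1 n) \<in> {(P0, P1). P0 \<in> prob_simplex \<and> P1 \<in> prob_simplex \<and>
                     0 < DJinf P0 P1 \<and> DJinf P0 P1 < \<infinity>}" using S by auto
      then have "(\<lambda>(P0, P1). DJinf (chan_out (qsc u v) P0) (chan_out (qsc u v) P1) / DJinf P0 P1) (P0 n, P1 n)
          \<le> etaJ_inf (qsc u v :: 'a \<Rightarrow> 'a \<Rightarrow> real)"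
        unfolding etaJ_inf_def by (rule SUP_upper)
      then show "DJinf (chan_out (qsc u v) (P0 n)) (chan_out (qsc u v) (P1 n)) / DJinf (P0 n) (P1 n)
          \<le> etaJ_inf (qsc u v :: 'a \<Rightarrow> 'a \<Rightarrow> real)" by simp
    qed
  qed
  have seqs: "\<forall>a b :: 'a. a \<noteq> b \<longrightarrow>
        (\<exists>P0 P1 :: nat \<Rightarrow> 'a \<Rightarrow> real.
           (\<forall>n. P0 n \<in> prob_simplex \<and> P1 n \<in> prob_simplex \<and> P0 n \<noteq> P1 n
                \<and> {x. P0 n x > 0} = {a, b} \<and> {x. P1 n x > 0} = {a, b})
         \<and> (\<forall>x. (\<lambda>n. P0 n x) \<longlonglongrightarrow> (if x \<in> {a, b} then 1/2 else 0))
         \<and> (\<forall>x. (\<lambda>n. P1 n x) \<longlonglongrightarrow> (if x \<in> {a, b} then 1/2 else 0))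
         \<and> (\<lambda>n. DJinf (chan_out (qsc u v) (P0 n)) (chan_out (qsc u v) (P1 n))
                   / DJinf (P0 n) (P1 n)) \<longlonglongrightarrow> ereal (\<bar>v - u\<bar> / (v + u)))"
  proof (intro allI impI)
    fix a b :: 'a assume "a \<noteq> b"
    from seq_exists[OF this u01(1) v01(1) uv] show "\<exists>P0 P1 :: nat \<Rightarrow> 'a \<Rightarrow> real.
           (\<forall>n. P0 n \<in> prob_simplex \<and> P1 n \<in> prob_simplex \<and> P0 n \<noteq> P1 n
                \<and> {x. P0 n x > 0} = {a, b} \<and> {x. P1 n x > 0} = {a, b})
         \<and> (\<forall>x. (\<lambda>n. P0 n x) \<longlonglongrightarrow> (if x \<in> {a, b} then 1/2 else 0))
         \<and> (\<forall>x. (\<lambda>n. P1 n x) \<longlonglongrightarrow> (if x \<in> {a, b} then 1/2 else 0))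
         \<and> (\<lambda>n. DJinf (chan_out (qsc u v) (P0 n)) (chan_out (qsc u v) (P1 n))
                   / DJinf (P0 n) (P1 n)) \<longlonglongrightarrow> ereal (\<bar>v - u\<bar> / (v + u))"
      by blast
  qed
  show ?thesis using ub lb seqs by (simp add: order_antisym)
qed

end
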